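(* Let $r \in \mathbb{Q}_{>0}$ be such that $S_r$ is atomic. Then: (1) if $r < 1$, then $\omega(1) = \infty$; (2) if $r \in \mathbb{N}$, then $\omega(1) = 1$; (3) if $r \in \mathbb{Q}_{>1} \setminus \mathbb{N}$, then $\omega(1) = \mathsf{d}(r)$.
   Context: For $q \in \mathbb{Q}_{>0}$, $\mathsf{n}(q),\mathsf{d}(q)$ are the positive coprime integers with $q = \mathsf{n}(q)/\mathsf{d}(q)$. $S_r$ is the additive submonoid of $(\mathbb{Q}_{\ge 0},+)$ generated by $\{r^n : n \in \mathbb{N}_0\}$; it is atomic exactly when $r=1$ or $\mathsf{n}(r)>1$, and $1$ is always an atom of $S_r$ when atomic. For $x,y \in S_r$, $x \mid_{S_r} y$ means $y = x + w$ for some $w \in S_r$. For $x \in S_r \setminus\{0\}$, $\omega(x)$ is the smallest $n \in \mathbb{N}$ such that whenever $x \mid_{S_r} a_1 + \dots + a_t$ for atoms $a_1, \dots, a_t$, there is $T \subseteq \{1,\dots,t\}$ with $|T| \le n$ and $x \mid_{S_r} \sum_{i \in T} a_i$; if no such $n$ exists, $\omega(x) = \infty$. *)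

theory Defs
  imports Complex_Main "HOL-Library.Extended_Nat"
begin

inductive_set Sr :: "rat \<Rightarrow> rat set" for r :: rat where
  zero: "0 \<in> Sr r"
| add_pow: "x \<in> Sr r \<Longrightarrow> x + r ^ n \<in> Sr r"

definition num_r :: "rat \<Rightarrow> int" where "num_r q = fst (quotient_of q)"
definition den_r :: "rat \<Rightarrow> int" where "den_r q = snd (quotient_of q)"

definition atom_Sr :: "rat \<Rightarrow> rat \<Rightarrow> bool" where
  "atom_Sr r a \<longleftrightarrow> a \<in> Sr r \<and> a \<noteq> 0 \<and>
     (\<forall>u \<in> Sr r. \<forall>v \<in> Sr r. a = u + v \<longrightarrow> u = 0 \<or> v = 0)"

definition atomic_Sr :: "rat \<Rightarrow> bool" where
  "atomic_Sr r \<longleftrightarrow> (\<forall>x \<in> Sr r. x \<noteq> 0 \<longrightarrow>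
     (\<exists>t (a :: nat \<Rightarrow> rat). (\<forall>i<t. atom_Sr r (a i)) \<and> x = (\<Sum>i<t. a i)))"

definition dvd_Sr :: "rat \<Rightarrow> rat \<Rightarrow> rat \<Rightarrow> bool" where
  "dvd_Sr r x y \<longleftrightarrow> (\<exists>w \<in> Sr r. y = x + w)"

definition omega_bound :: "rat \<Rightarrow> rat \<Rightarrow> nat \<Rightarrow> bool" where
  "omega_bound r x n \<longleftrightarrow>
     (\<forall>t (a :: nat \<Rightarrow> rat). (\<forall>i<t. atom_Sr r (a i)) \<longrightarrow> dvd_Sr r x (\<Sum>i<t. a i) \<longrightarrow>
        (\<exists>T \<subseteq> {..<t}. card T \<le> n \<and> dvd_Sr r x (\<Sum>i\<in>T. a i)))"

text \<open>omega(x): least n \<ge> 1 with the property, \<infinity> if none (Inf {} = \<infinity> in enat).\<close>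
definition omega_Sr :: "rat \<Rightarrow> rat \<Rightarrow> enat" where
  "omega_Sr r x = Inf {enat n | n. n \<ge> 1 \<and> omega_bound r x n}"

end

theory Submission
  imports Defs
begin

lemma Sr_nonneg: "x \<in> Sr r \<Longrightarrow> r \<ge> 0 \<Longrightarrow> x \<ge> 0"
  by (induction x rule: Sr.induct) auto

lemma Sr_nat: "rat_of_nat k \<in> Sr r"
proof (induction k)
  case 0 then show ?case using Sr.zero by simp
next
  case (Suc k) then show ?case using Sr.add_pow[of "of_nat k" r 0] by (simp add: add.commute)
qed

lemma Sr_add: "y \<in> Sr r \<Longrightarrow> x \<in> Sr r \<Longrightarrow> x + y \<in> Sr r"
  by (induction y rule: Sr.induct) (auto simp: add.assoc[symmetric] intro: Sr.add_pow)

lemma Sr_pow: "r ^ n \<in> Sr r"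
  using Sr.add_pow[OF Sr.zero, of r n] by simp

lemma Sr_rep: "x \<in> Sr r \<Longrightarrow> \<exists>c N. \<forall>M\<ge>N. x = (\<Sum>j\<le>M. of_nat (c j) * r ^ j)"
proof (induction x rule: Sr.induct)
  case zero
  then show ?case by (rule exI[of _ "\<lambda>_. 0"]) simp
next
  case (add_pow x n)
  then obtain c N where cN: "\<forall>M\<ge>N. x = (\<Sum>j\<le>M. of_nat (c j) * r ^ j)" by blast
  show ?case
  proof (intro exI allI impI)
    fix M assume M: "max N n \<le> M"
    have "(\<Sum>j\<le>M. of_nat ((c(n := c n + 1)) j) * r ^ j)
        = (\<Sum>j\<le>M. of_nat (c j) * r ^ j + (if j = n then r ^ j else 0))"
      by (rule sum.cong) (auto simp: algebra_simps)
    also have "\<dots> = (\<Sum>j\<le>M. of_nat (c j) * r ^ j) + r ^ n"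
      using M by (simp add: sum.distrib)
    finally show "x + r ^ n = (\<Sum>j\<le>M. of_nat ((c(n := c n + 1)) j) * r ^ j)"
      using cN M by simp
  qed
qed

lemma atom_pow: "atom_Sr r a \<Longrightarrow> r > 0 \<Longrightarrow> \<exists>e. a = r ^ e"
proof -
  assume a: "atom_Sr r a" and r: "r > 0"
  have "a \<in> Sr r" "a \<noteq> 0" using a by (auto simp: atom_Sr_def)
  then show ?thesis
  proof cases
    case zero then show ?thesis using \<open>a \<noteq> 0\<close> by simp
  next
    case (add_pow x n)
    then have "x = 0 \<or> r ^ n = 0" using a Sr_pow unfolding atom_Sr_def by blast
    then show ?thesis using r add_pow by auto
  qed
qed

lemma dvd1: "dvd_Sr r 1 y \<longleftrightarrow> y - 1 \<in> Sr r"
  unfolding dvd_Sr_def by (auto simp: algebra_simps intro!: bexI[of _ "y - 1"])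

lemma omega_mono:
  assumes ob: "omega_bound r x n" and nm: "n \<le> m" shows "omega_bound r x m"
  unfolding omega_bound_def
proof (intro allI impI)
  fix t and a :: "nat \<Rightarrow> rat"
  assume h1: "\<forall>i<t. atom_Sr r (a i)" and h2: "dvd_Sr r x (\<Sum>i<t. a i)"
  obtain T where T: "T \<subseteq> {..<t}" "card T \<le> n" "dvd_Sr r x (\<Sum>i\<in>T. a i)"
    using ob h1 h2 unfolding omega_bound_def by blast
  show "\<exists>T\<subseteq>{..<t}. card T \<le> m \<and> dvd_Sr r x (\<Sum>i\<in>T. a i)"
    using T nm by (intro exI[of _ T]) simp
qed

lemma G:
  fixes n d :: nat and r :: rat and m c :: "nat \<Rightarrow> nat"
  assumes cop: "coprime n d" and d: "d \<ge> 2" and r: "r = of_nat n / of_nat d"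
  shows "(\<forall>i\<in>{1..N}. m i < d) \<Longrightarrow>
    (\<Sum>i\<le>N. of_nat (m i) * r^i) = (\<Sum>i\<le>N. of_nat (c i) * r^i) \<Longrightarrow> c 0 \<le> m 0"
proof (induction N arbitrary: c)
  case 0 then show ?case by simp
next
  case (Suc N c)
  define K where "K = Suc N"
  have dpos: "(of_nat d :: rat) \<noteq> 0" using d by simp
  have conv: "(\<Sum>i\<le>K. of_nat (f i) * r^i) * of_nat d ^ K = of_nat (\<Sum>i\<le>K. f i * n^i * d^(K - i))"
    for f :: "nat \<Rightarrow> nat"
  proof -
    have "(\<Sum>i\<le>K. of_nat (f i) * r^i) * of_nat d ^ K = (\<Sum>i\<le>K. of_nat (f i) * r^i * of_nat d ^ K)"
      by (simp add: sum_distrib_right)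
    also have "\<dots> = (\<Sum>i\<le>K. of_nat (f i * n^i * d^(K - i)))"
    proof (rule sum.cong[OF refl])
      fix i assume "i \<in> {..K}"
      then have "(of_nat d :: rat) ^ K = of_nat d ^ i * of_nat d ^(K - i)"
        by (simp add: power_add[symmetric])
      moreover have "r ^ i * of_nat d ^ i = of_nat n ^ i"
        using dpos by (simp add: r power_divide)
      ultimately show "of_nat (f i) * r^i * of_nat d ^ K = (of_nat (f i * n^i * d^(K - i)) :: rat)"
        by (simp add: mult.assoc[symmetric])
    qed
    also have "\<dots> = of_nat (\<Sum>i\<le>K. f i * n^i * d^(K - i))" by simp
    finally show ?thesis .
  qed
  have eqK: "(\<Sum>i\<le>K. f i * n^i * d^(K - i)) = (\<Sum>i\<le>N. f i * n^i * d^(K - i)) + f K * n ^ K"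
    for f :: "nat \<Rightarrow> nat" by (simp add: K_def)
  have dv: "d dvd (\<Sum>i\<le>N. f i * n^i * d^(K - i))" for f :: "nat \<Rightarrow> nat"
  proof (rule dvd_sum)
    fix i assume "i \<in> {..N}"
    then have "K - i = Suc (N - i)" by (auto simp: K_def)
    then show "d dvd f i * n^i * d^(K - i)" by simp
  qed
  have "(of_nat (\<Sum>i\<le>K. m i * n^i * d^(K - i)) :: rat) = (\<Sum>i\<le>K. of_nat (m i) * r^i) * of_nat d ^ K"
    using conv[of m] by simp
  also have "\<dots> = (\<Sum>i\<le>K. of_nat (c i) * r^i) * of_nat d ^ K"
    using Suc.prems(2) by (simp add: K_def)
  also have "\<dots> = of_nat (\<Sum>i\<le>K. c i * n^i * d^(K - i))"
    using conv[of c] by simp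
  finally have natEq: "(\<Sum>i\<le>K. m i * n^i * d^(K - i)) = (\<Sum>i\<le>K. c i * n^i * d^(K - i))"
    by (simp only: of_nat_eq_iff)
  obtain a b where ab: "(\<Sum>i\<le>N. m i * n^i * d^(K - i)) = d * a" "(\<Sum>i\<le>N. c i * n^i * d^(K - i)) = d * b"
    using dv[of m] dv[of c] by (auto elim!: dvdE)
  have "d * a + m K * n ^ K = d * b + c K * n ^ K" using natEq eqK[of m] eqK[of c] ab by simp
  then have "(d * a + m K * n ^ K) mod d = (d * b + c K * n ^ K) mod d" by (simp only:)
  then have "(m K * n ^ K) mod d = (c K * n ^ K) mod d" by simp
  then have "int ((m K * n ^ K) mod d) = int ((c K * n ^ K) mod d)"
    by (simp only:)
  then have "int (m K * n ^ K) mod int d = int (c K * n ^ K) mod int d"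
    by (simp only: of_nat_mod)
  then have "int d dvd int (m K * n ^ K) - int (c K * n ^ K)"
    by (simp only: mod_eq_dvd_iff)
  moreover have "int (m K * n ^ K) - int (c K * n ^ K) = (int (m K) - int (c K)) * int n ^ K"
    by (simp add: algebra_simps)
  ultimately have dd: "int d dvd (int (m K) - int (c K)) * int n ^ K" by simp
  have "coprime (int d) (int n ^ K)" using cop by (simp add: coprime_commute)
  then have "int d dvd int (m K) - int (c K)"
    using dd coprime_dvd_mult_left_iff[of "int d" "int n ^ K" "int (m K) - int (c K)"] by simp
  then have "int (m K) mod int d = int (c K) mod int d" by (simp only: mod_eq_dvd_iff)
  then have "int (m K mod d) = int (c K mod d)" by (simp only: of_nat_mod)
  then have "m K mod d = c K mod d" by (simp only: of_nat_eq_iff)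
  moreover have "m K < d" using Suc.prems(1) by (auto simp: K_def)
  ultimately have mK: "m K = c K mod d" by simp
  define q where "q = c K div d"
  have cK: "c K = m K + d * q" using mK q_def by simp
  define c' where "c' = c(N := c N + q * n)"
  have rd: "of_nat d * r ^ K = of_nat n * r ^ N" using dpos by (simp add: K_def r)
  have "(\<Sum>i\<le>N. of_nat (m i) * r^i) + of_nat (m K) * r ^ K
      = (\<Sum>i\<le>N. of_nat (c i) * r^i) + of_nat (c K) * r ^ K"
    using Suc.prems(2) by (simp add: K_def)
  then have "(\<Sum>i\<le>N. of_nat (m i) * r^i) = (\<Sum>i\<le>N. of_nat (c i) * r^i) + of_nat q * (of_nat d * r ^ K)"
    by (simp add: cK algebra_simps)
  also have "\<dots> = (\<Sum>i\<le>N. of_nat (c i) * r^i) + of_nat q * of_nat n * r ^ N"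
    by (simp add: rd)
  also have "\<dots> = (\<Sum>i\<le>N. of_nat (c i) * r^i + (if i = N then of_nat q * of_nat n * r ^ i else 0))"
    by (simp add: sum.distrib)
  also have "\<dots> = (\<Sum>i\<le>N. of_nat (c' i) * r^i)"
    by (rule sum.cong) (auto simp: c'_def algebra_simps)
  finally have "c' 0 \<le> m 0" using Suc.IH[of c'] Suc.prems(1) by auto
  then show ?case by (auto simp: c'_def split: if_splits)
qed

lemma add_rep:
  assumes "p \<le> M"
  shows "(\<Sum>j\<le>M. of_nat (c j) * r^j) + of_nat k * r^p = (\<Sum>j\<le>M. of_nat ((c(p := c p + k)) j) * (r::rat)^j)"
proof -
  have "(\<Sum>j\<le>M. of_nat ((c(p := c p + k)) j) * r^j)
      = (\<Sum>j\<le>M. of_nat (c j) * r^j + (if j = p then of_nat k * r^j else 0))"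
    by (rule sum.cong) (auto simp: algebra_simps)
  also have "\<dots> = (\<Sum>j\<le>M. of_nat (c j) * r^j) + of_nat k * r^p"
    using assms by (simp add: sum.distrib)
  finally show ?thesis by simp
qed

lemma single_rep:
  assumes "p \<le> M"
  shows "of_nat k * r^p = (\<Sum>j\<le>M. of_nat (((\<lambda>_. 0)(p := k)) j) * (r::rat)^j)"
  using add_rep[OF assms, of "\<lambda>_. 0" r k] by simp

lemma rep_ge:
  assumes x: "x = (\<Sum>j\<le>M. of_nat (c j) * r^j)" and c0: "c 0 = 0" and nz: "x \<noteq> 0"
    and r: "(r::rat) \<ge> 1"
  shows "x \<ge> r"
proof -
  obtain j where j: "j \<le> M" "c j \<noteq> 0"
    using x nz by (metis (no_types, lifting) atMost_iff mult_eq_0_iff of_nat_0 sum.neutral)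
  then have j1: "j \<ge> 1" using c0 by (cases j) auto
  have "r \<le> r ^ j" using r j1 by (metis power_one_right power_increasing)
  also have "\<dots> \<le> of_nat (c j) * r^j" using j r by (simp add: mult_le_cancel_right1)
  also have "\<dots> \<le> x" unfolding x
    by (rule member_le_sum[where f = "\<lambda>j. of_nat (c j) * r^j"]) (use j r in auto)
  finally show ?thesis .
qed

lemma Sr_mult_pow: "rat_of_nat k * r ^ p \<in> Sr r"
proof (induction k)
  case 0 then show ?case using Sr.zero by simp
next
  case (Suc k) then show ?case using Sr.add_pow[of "of_nat k * r^p" r p] by (simp add: algebra_simps)
qed

lemma pow_n:
  assumes "n > d" "r = of_nat n / of_nat d" "d > 0"
  shows "of_nat n * r ^ j - of_nat n \<in> Sr r"
proof (induction j)
  case 0 then show ?case using Sr.zero by simp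
next
  case (Suc j)
  have rd: "of_nat d * r ^ Suc j = of_nat n * r ^ j" using assms by simp
  have "of_nat n * r ^ Suc j - of_nat n = of_nat (n - d) * r ^ Suc j + (of_nat n * r ^ j - of_nat n)"
    using assms(1) rd by (simp add: of_nat_diff algebra_simps)
  also have "\<dots> \<in> Sr r" by (rule Sr_add[OF Suc Sr_mult_pow])
  finally show ?case .
qed

lemma atoms_count:
  fixes t N :: nat and e :: "nat \<Rightarrow> nat"
  shows "(\<forall>i<t. e i \<le> N) \<Longrightarrow> (\<Sum>i<t. (r::rat) ^ (e i)) = (\<Sum>j\<le>N. of_nat (card {i. i<t \<and> e i = j}) * r^j)"
proof (induction t)
  case 0 then show ?case by simp
next
  case (Suc t)
  have cs: "card {i. i < Suc t \<and> e i = j} = card {i. i<t \<and> e i = j} + (if e t = j then 1 else 0)" for j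
  proof -
    have "{i. i < Suc t \<and> e i = j} = {i. i<t \<and> e i = j} \<union> (if e t = j then {t} else {})"
      by (auto simp: less_Suc_eq)
    then show ?thesis by auto
  qed
  have "(\<Sum>i<Suc t. r ^ (e i)) = (\<Sum>j\<le>N. of_nat (card {i. i<t \<and> e i = j}) * r^j) + of_nat 1 * r ^ (e t)"
    using Suc by simp
  also have "\<dots> = (\<Sum>j\<le>N. of_nat (((\<lambda>j. card {i. i<t \<and> e i = j})(e t := card {i. i<t \<and> e i = e t} + 1)) j) * r^j)"
    by (rule add_rep) (use Suc.prems in auto)
  also have "\<dots> = (\<Sum>j\<le>N. of_nat (card {i. i<Suc t \<and> e i = j}) * r^j)"
    by (rule sum.cong) (auto simp: cs)
  finally show ?case .
qed

lemma Sr_ge1: "x \<in> Sr r \<Longrightarrow> r \<ge> 1 \<Longrightarrow> x \<noteq> 0 \<Longrightarrow> x \<ge> 1"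
proof (induction x rule: Sr.induct)
  case zero then show ?case by simp
next
  case (add_pow x n)
  have "x \<ge> 0" using Sr_nonneg add_pow by simp
  moreover have "r ^ n \<ge> 1" using add_pow by simp
  ultimately show ?case by simp
qed

lemma part3:
  fixes n d :: nat and r :: rat
  assumes cop: "coprime n d" and d: "d \<ge> 2" and nd: "n > d" and r: "r = of_nat n / of_nat d"
  shows "omega_Sr r 1 = enat d"
proof -
  have rpos: "r > 1" using nd d unfolding r by (simp add: less_divide_eq_1)
  have r0: "r > 0" using rpos by simp
  have Gr: "\<And>M m c. \<forall>i\<in>{1..M}. m i < d \<Longrightarrow>
      (\<Sum>i\<le>M. of_nat (m i) * r^i) = (\<Sum>i\<le>M. of_nat (c i) * r^i) \<Longrightarrow> c 0 \<le> m 0"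
    using G[OF cop d r] by blast
  have ratom: "atom_Sr r r"
  proof -
    have "r \<in> Sr r" using Sr_pow[of r 1] by simp
    moreover have "\<forall>u\<in>Sr r. \<forall>v\<in>Sr r. r = u + v \<longrightarrow> u = 0 \<or> v = 0"
    proof (intro ballI impI)
      fix u v assume u: "u \<in> Sr r" and v: "v \<in> Sr r" and ruv: "r = u + v"
      obtain cu Nu where cu: "\<forall>M\<ge>Nu. u = (\<Sum>j\<le>M. of_nat (cu j) * r^j)" using Sr_rep[OF u] by blast
      obtain cv Nv where cv: "\<forall>M\<ge>Nv. v = (\<Sum>j\<le>M. of_nat (cv j) * r^j)" using Sr_rep[OF v] by blast
      define M where "M = max 1 (max Nu Nv)"
      have uM: "u = (\<Sum>j\<le>M. of_nat (cu j) * r^j)" using cu M_def by simp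
      have vM: "v = (\<Sum>j\<le>M. of_nat (cv j) * r^j)" using cv M_def by simp
      have "u + v = (\<Sum>j\<le>M. of_nat (cu j + cv j) * r^j)"
        unfolding uM vM by (simp add: sum.distrib algebra_simps)
      moreover have "r = (\<Sum>j\<le>M. of_nat (((\<lambda>_. 0)(1 := 1)) j) * r^j)"
        using single_rep[of 1 M 1 r] M_def by simp
      ultimately have eq: "(\<Sum>j\<le>M. of_nat (((\<lambda>_. 0)(1 := 1)) j) * r^j) = (\<Sum>j\<le>M. of_nat ((\<lambda>j. cu j + cv j) j) * r^j)"
        using ruv by simp
      have h: "\<forall>i\<in>{1..M}. ((\<lambda>_. 0)(1 := 1::nat)) i < d" using d by auto
      from Gr[OF h eq] have c0: "cu 0 = 0" "cv 0 = 0" by auto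
      show "u = 0 \<or> v = 0"
      proof (rule ccontr)
        assume "\<not> (u = 0 \<or> v = 0)"
        then have "u \<ge> r" "v \<ge> r" using rep_ge[OF uM c0(1)] rep_ge[OF vM c0(2)] rpos by auto
        then show False using ruv r0 by simp
      qed
    qed
    ultimately show ?thesis using rpos unfolding atom_Sr_def by auto
  qed
  have nosmall: "\<not> dvd_Sr r 1 (of_nat k * r)" if k: "0 < k" "k < d" for k
  proof
    assume "dvd_Sr r 1 (of_nat k * r)"
    then have w: "of_nat k * r - 1 \<in> Sr r" by (simp add: dvd1)
    obtain c N where cN: "\<forall>M\<ge>N. of_nat k * r - 1 = (\<Sum>j\<le>M. of_nat (c j) * r^j)" using Sr_rep[OF w] by blast
    define M where "M = max 1 N"
    have wM: "of_nat k * r - 1 = (\<Sum>j\<le>M. of_nat (c j) * r^j)" using cN by (simp add: M_def)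
    have "of_nat k * r^1 = (\<Sum>j\<le>M. of_nat (c j) * r^j) + of_nat 1 * r^0" by (simp add: wM[symmetric])
    also have "\<dots> = (\<Sum>j\<le>M. of_nat ((c(0 := c 0 + 1)) j) * r^j)" by (rule add_rep) simp
    finally have eq: "(\<Sum>j\<le>M. of_nat (((\<lambda>_. 0)(1 := k)) j) * r^j) = (\<Sum>j\<le>M. of_nat ((c(0 := c 0 + 1)) j) * r^j)"
      using single_rep[of 1 M k r] M_def by simp
    have h: "\<forall>i\<in>{1..M}. ((\<lambda>_. 0)(1 := k)) i < d" using k by auto
    from Gr[OF h eq] show False by simp
  qed
  have notd1: "\<not> omega_bound r 1 (d - 1)"
  proof
    assume ob: "omega_bound r 1 (d - 1)"
    have s1: "(\<Sum>i<d. r) = of_nat n" using r d by simp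
    have s2: "of_nat n - 1 = (of_nat (n - 1) :: rat)" using nd by (simp add: of_nat_diff)
    have dvs: "dvd_Sr r 1 (\<Sum>i<d. r)" unfolding dvd1 s1 s2 by (rule Sr_nat)
    have "\<exists>T\<subseteq>{..<d}. card T \<le> d - 1 \<and> dvd_Sr r 1 (\<Sum>i\<in>T. r)"
      using ob[unfolded omega_bound_def, THEN spec[of _ d], THEN spec[of _ "\<lambda>_. r"]] ratom dvs by simp
    then obtain T where T: "T \<subseteq> {..<d}" "card T \<le> d - 1" "dvd_Sr r 1 (\<Sum>i\<in>T. r)"
      by blast
    have sT: "(\<Sum>i\<in>T. r) = of_nat (card T) * r" by simp
    show False
    proof (cases "card T = 0")
      case True
      then have "(-1::rat) \<in> Sr r" using T(3) sT by (simp add: dvd1)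
      then show False using Sr_nonneg[of "-1" r] r0 by simp
    next
      case False
      then show False using nosmall[of "card T"] T d sT by simp
    qed
  qed
  have okd: "omega_bound r 1 d"
    unfolding omega_bound_def
  proof (intro allI impI)
    fix t and a :: "nat \<Rightarrow> rat"
    assume at: "\<forall>i<t. atom_Sr r (a i)" and dv: "dvd_Sr r 1 (\<Sum>i<t. a i)"
    have "\<forall>i. \<exists>k. i < t \<longrightarrow> a i = r ^ k" using atom_pow at r0 by blast
    then obtain e where e: "\<forall>i<t. a i = r ^ e i" using choice[of "\<lambda>i k. i < t \<longrightarrow> a i = r ^ k"] by blast
    show "\<exists>T\<subseteq>{..<t}. card T \<le> d \<and> dvd_Sr r 1 (\<Sum>i\<in>T. a i)"
    proof (cases "\<exists>i<t. e i = 0")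
      case True
      then obtain i where i: "i < t" "e i = 0" by blast
      show ?thesis
        by (rule exI[of _ "{i}"]) (use d e i Sr.zero in \<open>auto simp: dvd1\<close>)
    next
      case False
      show ?thesis
      proof (cases "\<exists>j. card {i. i<t \<and> e i = j} \<ge> d")
        case True
        then obtain j where j: "card {i. i<t \<and> e i = j} \<ge> d" by blast
        obtain T where T: "T \<subseteq> {i. i<t \<and> e i = j}" "card T = d" "finite T"
          using obtain_subset_with_card_n[OF j] by blast
        have "T \<noteq> {}" using T d by auto
        then obtain i0 where "i0 \<in> T" by blast
        then have "j \<noteq> 0" using T False by auto
        then obtain j' where j': "j = Suc j'" by (cases j) auto
        have "(\<Sum>i\<in>T. a i) = (\<Sum>i\<in>T. r^j)" using T e by (intro sum.cong) auto
        also have "\<dots> = of_nat d * r^j" using T by simp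
        also have "\<dots> = of_nat n * r^j'" using j' r d by simp
        finally have sT: "(\<Sum>i\<in>T. a i) = of_nat n * r^j'" .
        have "of_nat n * r^j' - 1 = (of_nat n * r^j' - of_nat n) + of_nat (n - 1)"
          using nd by (simp add: of_nat_diff)
        also have "\<dots> \<in> Sr r" using Sr_add[OF Sr_nat pow_n[OF nd r]] d by simp
        finally have "dvd_Sr r 1 (\<Sum>i\<in>T. a i)" using sT by (simp add: dvd1)
        then show ?thesis using T by auto
      next
        case False2: False
        have lt: "\<forall>i\<in>{1..M}. card {i'. i'<t \<and> e i' = i} < d" for M using False2 by (auto simp: not_le)
        have w: "(\<Sum>i<t. a i) - 1 \<in> Sr r" using dv by (simp add: dvd1)
        obtain c Nw where cN: "\<forall>M\<ge>Nw. (\<Sum>i<t. a i) - 1 = (\<Sum>j\<le>M. of_nat (c j) * r^j)"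
          using Sr_rep[OF w] by blast
        define M where "M = Nw + (\<Sum>i<t. e i)"
        have eM: "\<forall>i<t. e i \<le> M"
        proof (intro allI impI)
          fix i assume "i < t"
          then have "e i \<le> (\<Sum>i<t. e i)" by (intro member_le_sum) auto
          then show "e i \<le> M" by (simp add: M_def)
        qed
        have "(\<Sum>i<t. a i) = (\<Sum>i<t. r ^ e i)" using e by simp
        also have "\<dots> = (\<Sum>j\<le>M. of_nat (card {i. i<t \<and> e i = j}) * r^j)" by (rule atoms_count[OF eM])
        finally have s1: "(\<Sum>i<t. a i) = (\<Sum>j\<le>M. of_nat (card {i. i<t \<and> e i = j}) * r^j)" .
        have wM: "(\<Sum>i<t. a i) - 1 = (\<Sum>j\<le>M. of_nat (c j) * r^j)" using cN by (simp add: M_def)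
        have "(\<Sum>i<t. a i) = (\<Sum>j\<le>M. of_nat (c j) * r^j) + of_nat 1 * r^0" by (simp add: wM[symmetric])
        also have "\<dots> = (\<Sum>j\<le>M. of_nat ((c(0 := c 0 + 1)) j) * r^j)" by (rule add_rep) simp
        finally have eq: "(\<Sum>j\<le>M. of_nat ((\<lambda>j. card {i. i<t \<and> e i = j}) j) * r^j) = (\<Sum>j\<le>M. of_nat ((c(0 := c 0 + 1)) j) * r^j)"
          using s1 by simp
        have "(c(0 := c 0 + 1)) 0 \<le> (\<lambda>j. card {i. i<t \<and> e i = j}) 0" using Gr[OF lt eq] by simp
        moreover have "{i. i<t \<and> e i = 0} = {}" using False by auto
        ultimately show ?thesis by simp
      qed
    qed
  qed
  show ?thesis unfolding omega_Sr_def
  proof (rule antisym)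
    show "Inf {enat k |k. k \<ge> 1 \<and> omega_bound r 1 k} \<le> enat d"
      by (rule Inf_lower) (use okd d in auto)
    show "enat d \<le> Inf {enat k |k. k \<ge> 1 \<and> omega_bound r 1 k}"
    proof (rule Inf_greatest)
      fix y assume "y \<in> {enat k |k. k \<ge> 1 \<and> omega_bound r 1 k}"
      then obtain k where k: "y = enat k" "omega_bound r 1 k" by blast
      show "enat d \<le> y"
      proof (rule ccontr)
        assume "\<not> enat d \<le> y"
        then have "k \<le> d - 1" using k by auto
        then show False using omega_mono[OF k(2)] notd1 by blast
      qed
    qed
  qed
qed

lemma part1:
  fixes r :: rat
  assumes r0: "0 < r" and r1: "r < 1" and atm: "atomic_Sr r"
  shows "omega_Sr r 1 = \<infinity>"
proof -
  have bigatom: "\<exists>j\<ge>K. atom_Sr r (r^j)" for K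
  proof -
    have "r^K \<in> Sr r" "r^K \<noteq> 0" using Sr_pow r0 by auto
    then have "\<exists>t (a :: nat \<Rightarrow> rat). (\<forall>i<t. atom_Sr r (a i)) \<and> r^K = (\<Sum>i<t. a i)"
      using atm unfolding atomic_Sr_def by simp
    then obtain t :: nat and a :: "nat \<Rightarrow> rat" where at: "\<forall>i<t. atom_Sr r (a i)" and s: "r^K = (\<Sum>i<t. a i)"
      by blast
    have t: "t \<noteq> 0"
    proof
      assume "t = 0" then show False using s \<open>r^K \<noteq> 0\<close> by simp
    qed
    have "a 0 \<le> (\<Sum>i<t. a i)"
      by (rule member_le_sum) (use at t Sr_nonneg r0 in \<open>auto simp: atom_Sr_def\<close>)
    moreover obtain j where j: "a 0 = r^j" using atom_pow at t r0 by blast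
    ultimately have le: "r^j \<le> r^K" using s by simp
    have "j \<ge> K"
    proof (rule ccontr)
      assume "\<not> K \<le> j"
      then have "r^K < r^j" using r0 r1 by simp
      then show False using le by simp
    qed
    moreover have "atom_Sr r (a 0)" using at t by simp
    ultimately show ?thesis using j by auto
  qed
  have nob: "\<not> omega_bound r 1 k" if k: "k \<ge> 1" for k
  proof
    assume ob: "omega_bound r 1 k"
    have "real_of_rat r < real_of_rat 1" using r1 by (simp only: of_rat_less)
    then have "real_of_rat r < 1" by simp
    then obtain K where "(real_of_rat r)^K < 1 / real k"
      using real_arch_pow_inv[of "1 / real k" "real_of_rat r"] k by auto
    then have "real_of_rat (r^K) < real_of_rat (1 / of_nat k)"
      by (simp add: of_rat_power of_rat_divide)
    then have "r^K < 1 / of_nat k" by (simp only: of_rat_less)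
    then have K: "of_nat k * r^K < 1" using k by (simp add: field_simps)
    obtain j where j: "j \<ge> K" "atom_Sr r (r^j)" using bigatom by blast
    have "r^j \<le> r^K" using j r0 r1 by (simp add: power_decreasing)
    then have "of_nat k * r^j \<le> of_nat k * r^K" by (rule mult_left_mono) simp
    then have kj: "of_nat k * r^j < 1" using K by linarith
    obtain p q where pq: "quotient_of r = (p, q)" by (cases "quotient_of r")
    have q: "q > 0" using quotient_of_denom_pos[OF pq] .
    have rpq: "r = of_int p / of_int q" using quotient_of_div[OF pq] .
    have p: "p > 0" using r0 q rpq by (simp add: zero_less_divide_iff)
    have "of_int q * r = of_int p" using q rpq by simp
    then have "(of_int q * r)^j = (of_int p :: rat)^j" by simp
    then have sq: "of_nat (nat q ^ j) * r^j = of_nat (nat p ^ j)"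
      using p q by (simp add: power_mult_distrib)
    have "(\<Sum>i< nat q ^ j. r^j) = of_nat (nat p ^ j)" using sq by simp
    moreover have "nat p ^ j \<ge> 1" using p by simp
    ultimately have "dvd_Sr r 1 (\<Sum>i< nat q ^ j. r^j)" using Sr_nat[of "nat p ^ j - 1" r]
      by (simp add: dvd1 of_nat_diff)
    then have "\<exists>T\<subseteq>{..< nat q ^ j}. card T \<le> k \<and> dvd_Sr r 1 (\<Sum>i\<in>T. r^j)"
      using ob[unfolded omega_bound_def, THEN spec[of _ "nat q ^ j"], THEN spec[of _ "\<lambda>_. r^j"]] j by simp
    then obtain T where T: "T \<subseteq> {..< nat q ^ j}" "card T \<le> k" "dvd_Sr r 1 (\<Sum>i\<in>T. r^j)"
      by blast
    have "(\<Sum>i\<in>T. r^j) = of_nat (card T) * r^j" by simp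
    also have "\<dots> \<le> of_nat k * r^j" using T r0 by (simp add: mult_right_mono)
    finally have "(\<Sum>i\<in>T. r^j) < 1" using kj by simp
    moreover have "(\<Sum>i\<in>T. r^j) - 1 \<in> Sr r" using T(3) by (simp only: dvd1)
    then have "(\<Sum>i\<in>T. r^j) - 1 \<ge> 0" by (rule Sr_nonneg) (use r0 in simp)
    ultimately show False by simp
  qed
  have E: "{enat n |n. n \<ge> 1 \<and> omega_bound r 1 n} = {}" using nob by blast
  show ?thesis unfolding omega_Sr_def E by (simp add: top_enat_def)
qed

lemma part2:
  fixes r :: rat
  assumes r: "r = of_nat k" and k: "k \<ge> 1"
  shows "omega_Sr r 1 = 1"
proof -
  have ob: "omega_bound r 1 1"
    unfolding omega_bound_def
  proof (intro allI impI)
    fix t and a :: "nat \<Rightarrow> rat"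
    assume at: "\<forall>i<t. atom_Sr r (a i)" and dv: "dvd_Sr r 1 (\<Sum>i<t. a i)"
    have t: "t \<noteq> 0"
    proof
      assume "t = 0"
      then have "(-1::rat) \<in> Sr r" using dv by (simp add: dvd1)
      then show False using Sr_nonneg[of "-1" r] r by simp
    qed
    have "atom_Sr r (a 0)" using at t by simp
    then obtain e where e: "a 0 = r ^ e" using atom_pow[of r "a 0"] r k by auto
    have "k ^ e \<ge> 1" using k by simp
    then have "a 0 - 1 = of_nat (k ^ e - 1)" using e r by (simp add: of_nat_diff)
    then have "dvd_Sr r 1 (a 0)" using Sr_nat by (simp add: dvd1)
    then show "\<exists>T\<subseteq>{..<t}. card T \<le> 1 \<and> dvd_Sr r 1 (\<Sum>i\<in>T. a i)"
      using t by (intro exI[of _ "{0}"]) auto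
  qed
  show ?thesis unfolding omega_Sr_def
  proof (rule antisym)
    show "Inf {enat n |n. n \<ge> 1 \<and> omega_bound r 1 n} \<le> 1"
      using Inf_lower[of "enat 1" "{enat n |n. n \<ge> 1 \<and> omega_bound r 1 n}"] ob
      by (auto simp: one_enat_def)
    show "1 \<le> Inf {enat n |n. n \<ge> 1 \<and> omega_bound r 1 n}"
      by (rule Inf_greatest) (auto simp: one_enat_def)
  qed
qed

theorem proposition5p3:
  fixes r :: rat
  assumes "r > 0" and "atomic_Sr r"
  shows "(r < 1 \<longrightarrow> omega_Sr r 1 = \<infinity>)
       \<and> (r \<in> \<nat> \<longrightarrow> omega_Sr r 1 = 1)
       \<and> (r > 1 \<and> r \<notin> \<nat> \<longrightarrow> omega_Sr r 1 = enat (nat (den_r r)))"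
proof (intro conjI impI)
  assume "r < 1"
  then show "omega_Sr r 1 = \<infinity>" using part1 assms by blast
next
  assume "r \<in> \<nat>"
  then obtain k where k: "r = of_nat k" by (auto elim: Nats_cases)
  then have "k \<ge> 1" using assms(1) by (cases k) auto
  then show "omega_Sr r 1 = 1" using part2 k by blast
next
  assume h: "r > 1 \<and> r \<notin> \<nat>"
  obtain p q where pq: "quotient_of r = (p, q)" by (cases "quotient_of r")
  have q: "q > 0" using quotient_of_denom_pos[OF pq] .
  have cop: "coprime p q" using quotient_of_coprime[OF pq] .
  have rpq: "r = of_int p / of_int q" using quotient_of_div[OF pq] .
  have p: "p > q" using h q rpq by (simp add: less_divide_eq_1)
  have "q \<noteq> 1"
  proof
    assume "q = 1"
    then have "r = of_nat (nat p)" using rpq p q by simp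
    then show False using h by simp
  qed
  then have q2: "nat q \<ge> 2" using q by linarith
  have cop': "coprime (nat p) (nat q)" using cop p q by (simp add: coprime_int_iff[symmetric])
  have r': "r = of_nat (nat p) / of_nat (nat q)" using rpq p q by simp
  have "omega_Sr r 1 = enat (nat q)" by (rule part3[OF cop' q2 _ r']) (use p q in simp)
  then show "omega_Sr r 1 = enat (nat (den_r r))" by (simp add: den_r_def pq)
qed

end
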